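(* Let $\lambda_0>0$, $k_0 = 2\pi/\lambda_0$, $z_\text{b}>0$, and let $x_\text{b}^{(1)} < x_\text{b}^{(2)}$ be real numbers. Set $\mathcal{O}_\text{d} = (-\infty, x_\text{b}^{(1)}) \cup (x_\text{b}^{(2)}, +\infty)$. For $z>z_\text{b}$ and $x,\nu\in\mathbb{R}$ define $$K(z,x,\nu) = \frac{j}{\lambda_0 \sqrt{z_\text{b}\,(z-z_\text{b})}} \int_{\mathcal{O}_\text{d}} e^{-j \frac{k_0}{2 z_\text{b}} (\xi-\nu)^2}\, e^{-j \frac{k_0}{2 (z-z_\text{b})} (x-\xi)^2} \, \mathrm{d}\xi .$$ Then $$K(z,x,\nu) = \frac{1}{2} \sqrt{\frac{j}{\lambda_0 \, z}} \, e^{-j \frac{k_0}{2 z} (\nu-x)^2} \, F(z,x,\nu),$$ where $$F(z,x,\nu) = 1 + \operatorname{Erf}\!\left(\sqrt{\frac{j k_0 z}{2 z_\text{b} (z-z_\text{b})}} \left[ x_\text{b}^{(1)} - \frac{z_\text{b} x}{z} - \frac{(z-z_\text{b}) \nu}{z}\right]\right) + \operatorname{Erfc}\!\left(\sqrt{\frac{j k_0 z}{2 z_\text{b} (z-z_\text{b})}} \left[ x_\text{b}^{(2)} - \frac{z_\text{b} x}{z} - \frac{(z-z_\text{b}) \nu}{z}\right]\right).$$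
   Context: Here $j$ denotes the imaginary unit ($j^2=-1$). Square roots of complex numbers are principal-branch square roots (so $\sqrt{j}=e^{j\pi/4}$, and $\sqrt{j\,c}=e^{j\pi/4}\sqrt{c}$ for $c>0$). The integrals over the unbounded intervals are oscillatory and are understood as improper (limit) integrals. $\operatorname{Erf}(w) = \frac{2}{\sqrt{\pi}}\int_0^w e^{-t^2}\,\mathrm{d}t$ is the error function extended to complex arguments (an entire function), and $\operatorname{Erfc}(w) = 1 - \operatorname{Erf}(w)$ is the complementary error function. The function $K$ is the paraxial knife-edge diffraction kernel from an aperture point $\nu$ on the plane $z=0$ to an observation point $(z,x)$ beyond a thin obstacle occupying $[x_\text{b}^{(1)},x_\text{b}^{(2)}]$ in the plane $z=z_\text{b}$. *)

theory Defs
  imports "HOL-Complex_Analysis.Complex_Analysis"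
begin

text \<open>Complex error function: Erf w = 2/sqrt pi * integral of exp(-t^2) along the segment from 0 to w
  (path independent since the integrand is entire).\<close>
definition Erf :: "complex \<Rightarrow> complex" where
  "Erf w = (2 / of_real (sqrt pi)) * contour_integral (linepath 0 w) (\<lambda>t. exp (- (t ^ 2)))"

definition Erfc :: "complex \<Rightarrow> complex" where
  "Erfc w = 1 - Erf w"

definition kernel_integrand ::
  "real \<Rightarrow> real \<Rightarrow> real \<Rightarrow> real \<Rightarrow> real \<Rightarrow> real \<Rightarrow> complex" where
  "kernel_integrand k0 zb z x \<nu> \<xi> =
     exp (- \<i> * of_real (k0 / (2 * zb) * (\<xi> - \<nu>) ^ 2)) *
     exp (- \<i> * of_real (k0 / (2 * (z - zb)) * (x - \<xi>) ^ 2))"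

text \<open>Kernel K: the integral over O_d = (-inf, xb1) \<union> (xb2, +inf) is understood as the sum of the
  two improper (limit) integrals.\<close>
definition K ::
  "real \<Rightarrow> real \<Rightarrow> real \<Rightarrow> real \<Rightarrow> real \<Rightarrow> real \<Rightarrow> real \<Rightarrow> complex" where
  "K lambda0 zb xb1 xb2 z x \<nu> =
     (let k0 = 2 * pi / lambda0; g = kernel_integrand k0 zb z x \<nu> in
      (\<i> / of_real (lambda0 * sqrt (zb * (z - zb)))) *
      (Lim at_bot (\<lambda>A. integral {A..xb1} g) + Lim at_top (\<lambda>B. integral {xb2..B} g)))"

end

theory Submission imports Defs "HOL-Probability.Distributions" "HOL-Real_Asymp.Real_Asymp" begin

definition Ef :: "complex \<Rightarrow> complex" where
  "Ef w = contour_integral (linepath 0 w) (\<lambda>t. exp (- (t ^ 2)))"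

lemma Ef_deriv: "(Ef has_field_derivative exp (- (w ^ 2))) (at w)"
proof -
  have h: "(\<lambda>t. exp (- (t ^ 2))) holomorphic_on UNIV" by (intro holomorphic_intros)
  obtain g where g0: "\<And>x::complex. x \<in> UNIV \<Longrightarrow> (g has_field_derivative exp (- (x ^ 2))) (at x within UNIV)"
    using holomorphic_convex_primitive'[OF convex_UNIV open_UNIV h] by metis
  have g: "\<And>x. (g has_field_derivative exp (- (x ^ 2))) (at x)" using g0 by simp
  have e: "Ef w = g w - g 0" for w
  proof -
    have "((\<lambda>t. exp (- (t ^ 2))) has_contour_integral (g w - g 0)) (linepath 0 w)"
      using contour_integral_primitive[of UNIV g "\<lambda>t. exp (- (t ^ 2))" "linepath 0 w"] g by simp
    then show ?thesis unfolding Ef_def by (rule contour_integral_unique)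
  qed
  show ?thesis
    using g[of w] unfolding e[abs_def] by (auto intro!: derivative_eq_intros)
qed

lemma Ef_seg: "((\<lambda>t. exp (- (t ^ 2))) has_contour_integral (Ef v - Ef u)) (linepath u v)"
  using contour_integral_primitive[of UNIV Ef "\<lambda>t. exp (- (t ^ 2))" "linepath u v"] Ef_deriv
  by auto

lemma Ef_0: "Ef 0 = 0"
  unfolding Ef_def using Ef_seg[of 0 0] contour_integral_unique by auto

lemma Ef_odd: "Ef (- w) = - Ef w"
proof -
  have "\<And>x. x \<in> UNIV \<Longrightarrow> ((\<lambda>w. Ef (- w) + Ef w) has_field_derivative 0) (at x within UNIV)"
    by (auto intro!: derivative_eq_intros Ef_deriv[THEN DERIV_chain2])
  then obtain c where "\<forall>x\<in>UNIV. Ef (- x) + Ef x = c"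
    using has_field_derivative_zero_constant[of UNIV "\<lambda>w. Ef (- w) + Ef w"] by auto
  then have c: "\<forall>x. Ef (- x) + Ef x = c" by simp
  show ?thesis using c[rule_format, of w] c[rule_format, of 0] Ef_0 by (simp add: add_eq_0_iff)
qed

lemma Ef_real: "Ef (of_real r) = of_real (integral {0..r} (\<lambda>t. exp (- t\<^sup>2)))" if "r \<ge> 0"
proof -
  have "((\<lambda>t. exp (- ((of_real t :: complex) ^ 2))) has_integral (Ef (of_real r) - Ef (of_real 0))) {0..r}"
    by (rule fundamental_theorem_of_calculus[OF that])
       (auto intro!: has_vector_derivative_real_field Ef_deriv)
  then have "((\<lambda>t. of_real (exp (- t\<^sup>2)) :: complex) has_integral Ef (of_real r)) {0..r}"
    by (simp add: Ef_0 exp_of_real[symmetric])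
  moreover have "((\<lambda>t. of_real (exp (- t\<^sup>2)) :: complex) has_integral of_real (integral {0..r} (\<lambda>t. exp (- t\<^sup>2)))) {0..r}"
    by (intro has_integral_of_real integrable_integral integrable_continuous_interval continuous_intros)
  ultimately show ?thesis using has_integral_unique by blast
qed

lemma seg_bound:
  assumes "0 \<le> y1" "y1 \<le> y2"
  shows "norm (Ef (Complex r y2) - Ef (Complex r y1)) \<le> exp (y2\<^sup>2 - r\<^sup>2) * (y2 - y1)"
proof -
  have "norm (Ef (Complex r y2) - Ef (Complex r y1)) \<le> exp (y2\<^sup>2 - r\<^sup>2) * norm (Complex r y2 - Complex r y1)"
  proof (rule has_contour_integral_bound_linepath[OF Ef_seg])
    fix x assume "x \<in> closed_segment (Complex r y1) (Complex r y2)"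
    then have x: "Re x = r" "y1 \<le> Im x" "Im x \<le> y2"
      using assms by (auto simp: closed_segment_same_Re closed_segment_eq_real_ivl)
    have "Im x ^ 2 \<le> y2 ^ 2" using x assms by (intro power_mono) auto
    then show "norm (exp (- (x ^ 2))) \<le> exp (y2\<^sup>2 - r\<^sup>2)"
      using x by (simp add: power2_eq_square)
  qed auto
  also have "Complex r y2 - Complex r y1 = of_real (y2 - y1) * \<i>"
    by (simp add: complex_eq_iff)
  then have "norm (Complex r y2 - Complex r y1) = y2 - y1"
    using assms by (simp add: norm_mult of_real_diff[symmetric] del: of_real_diff)
  finally show ?thesis .
qed

lemma gauss_lim: "((\<lambda>b. integral {0..b} (\<lambda>t::real. exp (- t\<^sup>2))) \<longlongrightarrow> sqrt pi / 2) at_top"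
proof -
  have hb: "has_bochner_integral lborel (\<lambda>x. indicator {0..} x *\<^sub>R exp (- x\<^sup>2)) (sqrt pi / 2)"
    by (rule gaussian_moment_0)
  have si: "set_integrable lborel {0::real..} (\<lambda>x. exp (- x\<^sup>2))"
    using hb unfolding set_integrable_def by (simp add: has_bochner_integral_iff)
  have v: "(LINT x:{0::real..}|lborel. exp (- x\<^sup>2)) = sqrt pi / 2"
    using hb unfolding set_lebesgue_integral_def by (simp add: has_bochner_integral_iff)
  have t: "((\<lambda>b. LINT x:{0..b}|lborel. exp (- x\<^sup>2)) \<longlongrightarrow> sqrt pi / 2) at_top"
    using tendsto_set_lebesgue_integral_at_top[OF _ si] v by simp
  have e: "(LINT x:{0..b}|lborel. exp (- x\<^sup>2)) = integral {0..b} (\<lambda>t::real. exp (- t\<^sup>2))" for b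
    by (rule set_borel_integral_eq_integral(2)) (rule set_integrable_subset[OF si], auto)
  show ?thesis using t e by simp
qed

lemma Ef_diag: "((\<lambda>r. Ef (Complex r r)) \<longlongrightarrow> of_real (sqrt pi / 2)) at_top"
proof -
  have 1: "((\<lambda>r. Ef (of_real r)) \<longlongrightarrow> of_real (sqrt pi / 2)) at_top"
  proof (rule Lim_transform_eventually)
    show "((\<lambda>r. of_real (integral {0..r} (\<lambda>t::real. exp (- t\<^sup>2))) :: complex) \<longlongrightarrow> of_real (sqrt pi / 2)) at_top"
      by (rule tendsto_of_real[OF gauss_lim])
    show "\<forall>\<^sub>F r in at_top. complex_of_real (integral {0..r} (\<lambda>t. exp (- t\<^sup>2))) = Ef (complex_of_real r)"
      using eventually_ge_at_top[of "0::real"] by eventually_elim (simp add: Ef_real)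
  qed
  have 2: "((\<lambda>r. Ef (Complex r r) - Ef (of_real r)) \<longlongrightarrow> 0) at_top"
  proof (rule Lim_null_comparison)
    show "\<forall>\<^sub>F r in at_top. norm (Ef (Complex r r) - Ef (of_real r)) \<le>
        exp ((r - 1 / sqrt r)\<^sup>2 - r\<^sup>2) * (r - 1 / sqrt r) + exp (r\<^sup>2 - r\<^sup>2) * (r - (r - 1 / sqrt r))"
      using eventually_ge_at_top[of "1::real"]
    proof eventually_elim
      case (elim r)
      define d where "d = r - 1 / sqrt r"
      have "1 / sqrt r \<le> 1" using elim by simp
      moreover have "0 \<le> 1 / sqrt r" using elim by simp
      ultimately have d0: "0 \<le> d" "d \<le> r" using elim unfolding d_def by linarith+
      have "Ef (Complex r r) - Ef (of_real r) = (Ef (Complex r r) - Ef (Complex r d)) + (Ef (Complex r d) - Ef (Complex r 0))"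
        by (simp add: complex_of_real_def)
      also have "norm \<dots> \<le> norm (Ef (Complex r r) - Ef (Complex r d)) + norm (Ef (Complex r d) - Ef (Complex r 0))"
        by (rule norm_triangle_ineq)
      also have "\<dots> \<le> exp (r\<^sup>2 - r\<^sup>2) * (r - d) + exp (d\<^sup>2 - r\<^sup>2) * (d - 0)"
        using seg_bound[of d r r] seg_bound[of 0 d r] d0 by (intro add_mono) auto
      finally show ?case by (simp add: d_def)
    qed
    show "((\<lambda>r. exp ((r - 1 / sqrt r)\<^sup>2 - r\<^sup>2) * (r - 1 / sqrt r) + exp (r\<^sup>2 - r\<^sup>2) * (r - (r - 1 / sqrt r))) \<longlongrightarrow> 0) at_top"
      by real_asymp
  qed
  have "((\<lambda>r. Ef (of_real r) + (Ef (Complex r r) - Ef (of_real r))) \<longlongrightarrow> of_real (sqrt pi / 2) + 0) at_top"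
    by (rule tendsto_add[OF 1 2])
  then show ?thesis by simp
qed

lemma Ef_ray_top:
  assumes "\<rho> > 0"
  shows "((\<lambda>u. Ef (Complex \<rho> \<rho> * of_real u)) \<longlongrightarrow> of_real (sqrt pi / 2)) at_top"
proof -
  have f: "filterlim (\<lambda>u. \<rho> * u) at_top at_top"
    by (rule filterlim_tendsto_pos_mult_at_top[OF tendsto_const assms filterlim_ident])
  have "((\<lambda>u. Ef (Complex (\<rho> * u) (\<rho> * u))) \<longlongrightarrow> of_real (sqrt pi / 2)) at_top"
    using filterlim_compose[OF Ef_diag f] by (simp add: o_def)
  moreover have "Complex \<rho> \<rho> * of_real u = Complex (\<rho> * u) (\<rho> * u)" for u
    by (simp add: complex_eq_iff)
  ultimately show ?thesis by simp
qed

lemma Ef_ray_bot: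
  assumes "\<rho> > 0"
  shows "((\<lambda>u. Ef (Complex \<rho> \<rho> * of_real u)) \<longlongrightarrow> - of_real (sqrt pi / 2)) at_bot"
proof -
  have "((\<lambda>u. - Ef (Complex \<rho> \<rho> * of_real u)) \<longlongrightarrow> - of_real (sqrt pi / 2)) at_top"
    by (intro tendsto_minus Ef_ray_top assms)
  moreover have "- Ef (Complex \<rho> \<rho> * of_real u) = Ef (Complex \<rho> \<rho> * of_real (- u))" for u
    using Ef_odd[of "Complex \<rho> \<rho> * of_real u"] by simp
  ultimately show ?thesis
    unfolding filterlim_at_bot_mirror by simp
qed

theorem proposition1:
  fixes lambda0 zb xb1 xb2 z x \<nu> :: real
  assumes "lambda0 > 0" and "zb > 0" and "xb1 < xb2" and "z > zb"
  defines "k0 \<equiv> 2 * pi / lambda0"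
  defines "a \<equiv> csqrt (\<i> * of_real (k0 * z / (2 * zb * (z - zb))))"
  shows "(\<exists>l. ((\<lambda>A. integral {A..xb1} (kernel_integrand k0 zb z x \<nu>)) \<longlongrightarrow> l) at_bot)
       \<and> (\<exists>l. ((\<lambda>B. integral {xb2..B} (kernel_integrand k0 zb z x \<nu>)) \<longlongrightarrow> l) at_top)
       \<and> K lambda0 zb xb1 xb2 z x \<nu> =
           (1 / 2) * csqrt (\<i> / of_real (lambda0 * z))
           * exp (- \<i> * of_real (k0 / (2 * z) * (\<nu> - x) ^ 2))
           * (1 + Erf (a * of_real (xb1 - zb * x / z - (z - zb) * \<nu> / z))
                + Erfc (a * of_real (xb2 - zb * x / z - (z - zb) * \<nu> / z)))"
proof -
  note l0 = \<open>lambda0 > 0\<close> and zb0 = \<open>zb > 0\<close> and zzb = \<open>z > zb\<close>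
  have z0: "z > 0" using zb0 zzb by linarith
  have zmzb: "z - zb > 0" using zzb by linarith
  have k0: "k0 > 0" using l0 by (simp add: k0_def)
  define c where "c = k0 * z / (2 * zb * (z - zb))"
  have c0: "c > 0" using k0 z0 zb0 zmzb by (simp add: c_def)
  define \<rho> where "\<rho> = sqrt (c / 2)"
  have \<rho>0: "\<rho> > 0" using c0 by (simp add: \<rho>_def)
  have \<rho>sq: "\<rho> * \<rho> = c / 2" using c0 by (simp add: \<rho>_def)
  have a_eq: "a = Complex \<rho> \<rho>"
    unfolding a_def c_def[symmetric]
    by (rule csqrt_unique) (use \<rho>sq \<rho>0 in \<open>auto simp: complex_eq_iff power2_eq_square\<close>)
  have a_nz: "a \<noteq> 0" using \<rho>0 by (simp add: a_eq complex_eq_iff)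
  have asq: "a * a = \<i> * of_real c"
    using \<rho>sq by (simp add: a_eq complex_eq_iff)
  define \<sigma> where "\<sigma> = sqrt (1 / (2 * lambda0 * z))"
  have \<sigma>0: "\<sigma> > 0" using l0 z0 by (simp add: \<sigma>_def)
  have \<sigma>sq: "\<sigma> * \<sigma> = 1 / (2 * lambda0 * z)" using l0 z0 by (simp add: \<sigma>_def)
  have s_eq: "csqrt (\<i> / of_real (lambda0 * z)) = Complex \<sigma> \<sigma>"
    by (rule csqrt_unique) (use \<sigma>sq \<sigma>0 l0 z0 in \<open>auto simp: complex_eq_iff power2_eq_square field_simps\<close>)
  define L where "L = sqrt (zb * (z - zb))"
  have L0: "L > 0" using zb0 zmzb by (simp add: L_def)
  have realkey: "2 * \<sigma> * \<rho> * lambda0 * L = sqrt pi"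
  proof -
    have sq4: "4 * lambda0 * lambda0 = (2 * lambda0) ^ 2" by (simp add: power2_eq_square)
    have s4: "sqrt (4 * lambda0 * lambda0) = 2 * lambda0" unfolding sq4 real_sqrt_abs using l0 by simp
    have "sqrt (4 * lambda0 * lambda0 * (1 / (2 * lambda0 * z)) * (c / 2) * (zb * (z - zb)))
        = sqrt (4 * lambda0 * lambda0) * sqrt (1 / (2 * lambda0 * z)) * sqrt (c / 2) * sqrt (zb * (z - zb))"
      by (simp only: real_sqrt_mult)
    also have "\<dots> = 2 * \<sigma> * \<rho> * lambda0 * L"
      unfolding s4 \<sigma>_def[symmetric] \<rho>_def[symmetric] L_def[symmetric] by simp
    finally have e1: "2 * \<sigma> * \<rho> * lambda0 * L = sqrt (4 * lambda0 * lambda0 * (1 / (2 * lambda0 * z)) * (c / 2) * (zb * (z - zb)))" ..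
    have "4 * lambda0 * lambda0 * (1 / (2 * lambda0 * z)) * (c / 2) * (zb * (z - zb)) = pi"
      using l0 z0 zb0 zmzb by (simp add: c_def k0_def field_simps)
    then show ?thesis using e1 by simp
  qed
  have key: "Complex \<sigma> \<sigma> = \<i> * of_real (sqrt pi) / (a * of_real (lambda0 * L))"
  proof -
    have "Complex \<sigma> \<sigma> * a * of_real (lambda0 * L) = \<i> * of_real (2 * \<sigma> * \<rho> * lambda0 * L)"
      by (simp add: a_eq complex_eq_iff)
    then have "Complex \<sigma> \<sigma> * (a * of_real (lambda0 * L)) = \<i> * of_real (2 * \<sigma> * \<rho> * lambda0 * L)"
      by (simp only: mult.assoc)
    then have "Complex \<sigma> \<sigma> * (a * of_real (lambda0 * L)) = \<i> * of_real (sqrt pi)"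
      by (simp only: realkey)
    moreover have "a * of_real (lambda0 * L) \<noteq> 0" using a_nz l0 L0 by simp
    ultimately show ?thesis by (simp add: eq_divide_eq)
  qed
  define m where "m = zb * x / z + (z - zb) * \<nu> / z"
  define P where "P = exp (- \<i> * of_real (k0 / (2 * z) * (\<nu> - x) ^ 2))"
  define g where "g = kernel_integrand k0 zb z x \<nu>"
  have realid: "k0 / (2 * zb) * (\<xi> - \<nu>) ^ 2 + k0 / (2 * (z - zb)) * (x - \<xi>) ^ 2
      = k0 / (2 * z) * (\<nu> - x) ^ 2 + c * (\<xi> - m) ^ 2" for \<xi>
    using z0 zb0 zmzb unfolding c_def m_def
    by (simp add: field_simps power2_eq_square)
  have g_eq: "g \<xi> = P * exp (- ((a * of_real (\<xi> - m)) ^ 2))" for \<xi>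
  proof -
    have "g \<xi> = exp (- \<i> * of_real (k0 / (2 * zb) * (\<xi> - \<nu>) ^ 2 + k0 / (2 * (z - zb)) * (x - \<xi>) ^ 2))"
      unfolding g_def kernel_integrand_def by (simp add: exp_add[symmetric] algebra_simps)
    also have "\<dots> = exp (- \<i> * of_real (k0 / (2 * z) * (\<nu> - x) ^ 2) + - ((a * of_real (\<xi> - m)) ^ 2))"
    proof -
      have "(a * of_real (\<xi> - m)) ^ 2 = (a * a) * of_real ((\<xi> - m) ^ 2)"
        by (simp only: power2_eq_square of_real_mult mult_ac)
      also have "\<dots> = \<i> * of_real (c * (\<xi> - m) ^ 2)" unfolding asq by simp
      finally have sq: "(a * of_real (\<xi> - m)) ^ 2 = \<i> * of_real (c * (\<xi> - m) ^ 2)" .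
      show ?thesis unfolding realid sq by (simp add: distrib_left)
    qed
    finally show ?thesis unfolding P_def exp_add .
  qed
  define G where "G \<xi> = P * Ef (a * of_real (\<xi> - m)) / a" for \<xi>
  have Gder: "(G has_vector_derivative g \<xi>) (at \<xi> within S)" for \<xi> S
  proof -
    have "((\<lambda>w. P * Ef (a * (w - of_real m)) / a) has_field_derivative
        P * (exp (- ((a * (of_real \<xi> - of_real m)) ^ 2)) * (a * (1 - 0))) / a) (at (of_real \<xi>))"
    proof -
      have d1: "((\<lambda>w. a * (w - of_real m)) has_field_derivative a * (1 - 0)) (at (of_real \<xi>))"
        by (rule DERIV_cmult, rule DERIV_diff, rule DERIV_ident, rule DERIV_const)
      show ?thesis using DERIV_cdivide[OF DERIV_cmult[OF DERIV_chain2[OF Ef_deriv d1]]] .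
    qed
    then have dd: "((\<lambda>w. P * Ef (a * (w - of_real m)) / a) has_field_derivative g \<xi>) (at (of_real \<xi>))"
      using a_nz by (simp add: g_eq)
    have Gf: "G = (\<lambda>x. P * Ef (a * (of_real x - of_real m)) / a)"
      by (rule ext) (simp add: G_def)
    from has_vector_derivative_real_field[OF dd] show ?thesis
      unfolding Gf .
  qed
  have Gint: "integral {A..B} g = G B - G A" if "A \<le> B" for A B
    by (rule integral_unique, rule fundamental_theorem_of_calculus[OF that]) (auto intro: Gder)
  have sp: "of_real (sqrt pi / 2) = (of_real (sqrt pi) / 2 :: complex)" by simp
  have Gtop: "(G \<longlongrightarrow> P * of_real (sqrt pi / 2) / a) at_top"
  proof -
    have f: "filterlim (\<lambda>B. B - m) at_top at_top" by real_asymp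
    have "((\<lambda>B. Ef (Complex \<rho> \<rho> * of_real (B - m))) \<longlongrightarrow> of_real (sqrt pi / 2)) at_top"
      using filterlim_compose[OF Ef_ray_top[OF \<rho>0] f] by (simp add: o_def)
    then show ?thesis unfolding G_def a_eq using a_nz[unfolded a_eq] by (intro tendsto_intros) auto
  qed
  have Gbot: "(G \<longlongrightarrow> P * (- of_real (sqrt pi / 2)) / a) at_bot"
  proof -
    have f: "filterlim (\<lambda>B. B - m) at_bot at_bot" by real_asymp
    have "((\<lambda>B. Ef (Complex \<rho> \<rho> * of_real (B - m))) \<longlongrightarrow> - of_real (sqrt pi / 2)) at_bot"
      using filterlim_compose[OF Ef_ray_bot[OF \<rho>0] f] by (simp add: o_def)
    then show ?thesis unfolding G_def a_eq using a_nz[unfolded a_eq] by (intro tendsto_intros) auto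
  qed
  have Lbot: "((\<lambda>A. integral {A..xb1} g) \<longlongrightarrow> G xb1 - P * (- of_real (sqrt pi / 2)) / a) at_bot"
  proof (rule Lim_transform_eventually)
    show "((\<lambda>A. G xb1 - G A) \<longlongrightarrow> G xb1 - P * (- of_real (sqrt pi / 2)) / a) at_bot"
      by (intro tendsto_intros Gbot)
    show "\<forall>\<^sub>F A in at_bot. G xb1 - G A = integral {A..xb1} g"
      using eventually_le_at_bot[of xb1] by eventually_elim (simp add: Gint)
  qed
  have Ltop: "((\<lambda>B. integral {xb2..B} g) \<longlongrightarrow> P * of_real (sqrt pi / 2) / a - G xb2) at_top"
  proof (rule Lim_transform_eventually)
    show "((\<lambda>B. G B - G xb2) \<longlongrightarrow> P * of_real (sqrt pi / 2) / a - G xb2) at_top"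
      by (intro tendsto_intros Gtop)
    show "\<forall>\<^sub>F B in at_top. G B - G xb2 = integral {xb2..B} g"
      using eventually_ge_at_top[of xb2] by eventually_elim (simp add: Gint)
  qed
  have Erf_eq: "Erf w = 2 / of_real (sqrt pi) * Ef w" for w
    by (simp add: Erf_def Ef_def)
  have K_eq: "K lambda0 zb xb1 xb2 z x \<nu> = (\<i> / of_real (lambda0 * L)) *
      ((G xb1 - P * (- of_real (sqrt pi / 2)) / a) + (P * of_real (sqrt pi / 2) / a - G xb2))"
    unfolding K_def Let_def k0_def[symmetric] g_def[symmetric] L_def[symmetric]
    using tendsto_Lim[OF trivial_limit_at_bot_linorder Lbot] tendsto_Lim[OF trivial_limit_at_top_linorder Ltop]
    by simp
  have arg1: "xb1 - zb * x / z - (z - zb) * \<nu> / z = xb1 - m" by (simp add: m_def)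
  have arg2: "xb2 - zb * x / z - (z - zb) * \<nu> / z = xb2 - m" by (simp add: m_def)
  have final: "K lambda0 zb xb1 xb2 z x \<nu> =
           (1 / 2) * csqrt (\<i> / of_real (lambda0 * z))
           * exp (- \<i> * of_real (k0 / (2 * z) * (\<nu> - x) ^ 2))
           * (1 + Erf (a * of_real (xb1 - zb * x / z - (z - zb) * \<nu> / z))
                + Erfc (a * of_real (xb2 - zb * x / z - (z - zb) * \<nu> / z)))"
    unfolding K_eq arg1 arg2 s_eq key P_def[symmetric] Erfc_def Erf_eq G_def
    using a_nz l0 L0 by (simp add: field_simps)
  show ?thesis
    using Lbot Ltop final unfolding g_def by blast
qed

end
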